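(* Let $L^x,L^y>0$, let $i\neq j$ be two boxes, each box $k\in\{i,j\}$ having center $(c^x_k,c^y_k)$, side lengths $(\ell^x_k,\ell^y_k)$ and constants $lb^s_k>0$. Let $Q^{obj}$ be the set of $(c_i,c_j,\ell_i,\ell_j,d^x_{i,j},d^y_{i,j})\in\mathbb{R}^{10}$ with $\tfrac12\ell^s_k\le c^s_k\le L^s-\tfrac12\ell^s_k$, $\ell^s_k\ge lb^s_k$ for all $s\in\{x,y\},k\in\{i,j\}$, and $d^s_{i,j}\ge c^s_i-c^s_j$, $d^s_{i,j}\ge c^s_j-c^s_i$ for $s\in\{x,y\}$. Let $E$ be the set of $(c,\ell,d,z)$ with $(c,\ell,d)\in Q^{obj}$, $z=(z^s_{p,q})_{s\in\{x,y\},(p,q)\in\{(i,j),(j,i)\}}\in\{0,1\}^4$ not identically zero, $z^s_{i,j}+z^s_{j,i}\le1$ for each $s$, $z^s_{p,q}=1\Rightarrow\mathscr{B}_p\leftarrow_s\mathscr{B}_q$, and $z^s_{i,j}=z^s_{j,i}=0\Rightarrow(\mathscr{B}_i\not\leftarrow_s\mathscr{B}_j$ and $\mathscr{B}_j\not\leftarrow_s\mathscr{B}_i)$. Then for every $s\in\{x,y\}$ and $\{p,q\}=\{i,j\}$, all points of $E$ satisfy \begin{align*} d^s_{i,j}&\ge\tfrac12(\ell^s_i+\ell^s_j)-L^s(1-z^s_{i,j}-z^s_{j,i}),\\ d^s_{i,j}&\ge c^s_p-c^s_q+\ell^s_p+lb^s_q(z^s_{p,q}+z^s_{q,p})-L^s(1-z^s_{p,q}),\\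 d^s_{i,j}&\ge c^s_p-c^s_q+(lb^s_p+lb^s_q)z^s_{p,q},\\ 2d^s_{i,j}&\ge\ell^s_p-L^s(1-z^s_{p,q}-z^s_{q,p})+lb^s_q(z^s_{p,q}+z^s_{q,p}). \end{align*}
   Context: $\mathscr{B}_p\leftarrow_s\mathscr{B}_q$ means $c^s_p+\tfrac12\ell^s_p\le c^s_q-\tfrac12\ell^s_q$, and $\mathscr{B}_p\not\leftarrow_s\mathscr{B}_q$ means $c^s_p+\tfrac12\ell^s_p\ge c^s_q-\tfrac12\ell^s_q$. $E$ is the paper's embedding $\operatorname{Em}(Q^{obj},D^8,C^8)$; the variables $d^s_{i,j}$ linearize the Manhattan-distance objective $|c^s_i-c^s_j|$. In the paper $lb^s_k=\beta_k/ub^s_k$ with $ub^s_k=\min\{\sqrt{\alpha_k\beta_k},L^s\}$. *)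

theory Defs
  imports Main "HOL.Real"
begin

datatype axis = X | Y

definition precedes :: "(axis \<Rightarrow> 'b \<Rightarrow> real) \<Rightarrow> (axis \<Rightarrow> 'b \<Rightarrow> real) \<Rightarrow> axis \<Rightarrow> 'b \<Rightarrow> 'b \<Rightarrow> bool" where
  "precedes c l s p q \<longleftrightarrow> c s p + l s p / 2 \<le> c s q - l s q / 2"

text \<open>The paper's "not precedes" relation (non-strict, as defined in the paper):
  c_p + l_p/2 >= c_q - l_q/2.\<close>
definition not_precedes :: "(axis \<Rightarrow> 'b \<Rightarrow> real) \<Rightarrow> (axis \<Rightarrow> 'b \<Rightarrow> real) \<Rightarrow> axis \<Rightarrow> 'b \<Rightarrow> 'b \<Rightarrow> bool" where
  "not_precedes c l s p q \<longleftrightarrow> c s p + l s p / 2 \<ge> c s q - l s q / 2"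

definition in_Qobj :: "(axis \<Rightarrow> real) \<Rightarrow> (axis \<Rightarrow> 'b \<Rightarrow> real) \<Rightarrow> 'b \<Rightarrow> 'b
    \<Rightarrow> (axis \<Rightarrow> 'b \<Rightarrow> real) \<Rightarrow> (axis \<Rightarrow> 'b \<Rightarrow> real) \<Rightarrow> (axis \<Rightarrow> real) \<Rightarrow> bool" where
  "in_Qobj L lb i j c l d \<longleftrightarrow>
     (\<forall>s. \<forall>k\<in>{i, j}. l s k / 2 \<le> c s k \<and> c s k \<le> L s - l s k / 2 \<and> l s k \<ge> lb s k) \<and>
     (\<forall>s. d s \<ge> c s i - c s j \<and> d s \<ge> c s j - c s i)"

definition in_E :: "(axis \<Rightarrow> real) \<Rightarrow> (axis \<Rightarrow> 'b \<Rightarrow> real) \<Rightarrow> 'b \<Rightarrow> 'b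
    \<Rightarrow> (axis \<Rightarrow> 'b \<Rightarrow> real) \<Rightarrow> (axis \<Rightarrow> 'b \<Rightarrow> real) \<Rightarrow> (axis \<Rightarrow> real)
    \<Rightarrow> (axis \<Rightarrow> 'b \<Rightarrow> 'b \<Rightarrow> real) \<Rightarrow> bool" where
  "in_E L lb i j c l d z \<longleftrightarrow>
     in_Qobj L lb i j c l d \<and>
     (\<forall>s. z s i j \<in> {0, 1} \<and> z s j i \<in> {0, 1}) \<and>
     \<not> (\<forall>s. z s i j = 0 \<and> z s j i = 0) \<and>
     (\<forall>s. z s i j + z s j i \<le> 1) \<and>
     (\<forall>s. (z s i j = 1 \<longrightarrow> precedes c l s i j) \<and> (z s j i = 1 \<longrightarrow> precedes c l s j i)) \<and>
     (\<forall>s. z s i j = 0 \<and> z s j i = 0 \<longrightarrow> not_precedes c l s i j \<and> not_precedes c l s j i)"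

end

theory Submission
  imports Defs
begin

lemma aux:
  fixes ci cj li lj lbi lbj L d a b :: real
  assumes "li / 2 \<le> ci" "ci \<le> L - li / 2" "li \<ge> lbi"
    "lj / 2 \<le> cj" "cj \<le> L - lj / 2" "lj \<ge> lbj"
    "d \<ge> ci - cj" "d \<ge> cj - ci"
    "(a = 0 \<and> b = 0) \<or> (a = 1 \<and> b = 0 \<and> ci + li/2 \<le> cj - lj/2) \<or> (a = 0 \<and> b = 1 \<and> cj + lj/2 \<le> ci - li/2)"
  shows "d \<ge> (li + lj) / 2 - L * (1 - a - b) \<and>
         d \<ge> ci - cj + li + lbj * (a + b) - L * (1 - a) \<and>
         d \<ge> ci - cj + (lbi + lbj) * a \<and>
         2 * d \<ge> li - L * (1 - a - b) + lbj * (a + b)"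
  using assms(9)
proof (elim disjE conjE)
  assume "a = 0" "b = 0"
  then show ?thesis using assms(1-8) by (simp add: field_simps; linarith)
next
  assume "a = 1" "b = 0" "ci + li/2 \<le> cj - lj/2"
  then show ?thesis using assms(1-8) by (simp add: field_simps; linarith)
next
  assume "a = 0" "b = 1" "cj + lj/2 \<le> ci - li/2"
  then show ?thesis using assms(1-8) by (simp add: field_simps; linarith)
qed

theorem proposition6p4:
  fixes L :: "axis \<Rightarrow> real" and lb c l :: "axis \<Rightarrow> 'b \<Rightarrow> real"
    and d :: "axis \<Rightarrow> real" and z :: "axis \<Rightarrow> 'b \<Rightarrow> 'b \<Rightarrow> real"
    and i j :: 'b
  assumes "\<forall>s. L s > 0"
    and "i \<noteq> j"
    and "\<forall>s. \<forall>k\<in>{i, j}. lb s k > 0"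
    and "in_E L lb i j c l d z"
  shows "\<forall>s p q. (p = i \<and> q = j \<or> p = j \<and> q = i) \<longrightarrow>
           d s \<ge> (l s i + l s j) / 2 - L s * (1 - z s i j - z s j i) \<and>
           d s \<ge> c s p - c s q + l s p + lb s q * (z s p q + z s q p) - L s * (1 - z s p q) \<and>
           d s \<ge> c s p - c s q + (lb s p + lb s q) * z s p q \<and>
           2 * d s \<ge> l s p - L s * (1 - z s p q - z s q p) + lb s q * (z s p q + z s q p)"
proof (intro allI impI)
  fix s p q assume pq: "p = i \<and> q = j \<or> p = j \<and> q = i"
  have E: "in_Qobj L lb i j c l d" and z01: "z s i j \<in> {0, 1} \<and> z s j i \<in> {0, 1}"
    and zs: "z s i j + z s j i \<le> 1"
    and pr: "(z s i j = 1 \<longrightarrow> precedes c l s i j) \<and> (z s j i = 1 \<longrightarrow> precedes c l s j i)"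
    using assms(4) unfolding in_E_def by blast+
  have Q: "l s i / 2 \<le> c s i" "c s i \<le> L s - l s i / 2" "l s i \<ge> lb s i"
          "l s j / 2 \<le> c s j" "c s j \<le> L s - l s j / 2" "l s j \<ge> lb s j"
          "d s \<ge> c s i - c s j" "d s \<ge> c s j - c s i"
    using E unfolding in_Qobj_def by auto
  have Z: "(z s i j = 0 \<and> z s j i = 0) \<or> (z s i j = 1 \<and> z s j i = 0 \<and> c s i + l s i/2 \<le> c s j - l s j/2)
     \<or> (z s i j = 0 \<and> z s j i = 1 \<and> c s j + l s j/2 \<le> c s i - l s i/2)"
    using z01 zs pr unfolding precedes_def by auto
  have Z': "(z s j i = 0 \<and> z s i j = 0) \<or> (z s j i = 1 \<and> z s i j = 0 \<and> c s j + l s j/2 \<le> c s i - l s i/2)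
     \<or> (z s j i = 0 \<and> z s i j = 1 \<and> c s i + l s i/2 \<le> c s j - l s j/2)"
    using Z by auto
  note A1 = aux[OF Q Z]
  note A2 = aux[OF Q(4,5,6,1,2,3,8,7) Z']
  from pq show "d s \<ge> (l s i + l s j) / 2 - L s * (1 - z s i j - z s j i) \<and>
           d s \<ge> c s p - c s q + l s p + lb s q * (z s p q + z s q p) - L s * (1 - z s p q) \<and>
           d s \<ge> c s p - c s q + (lb s p + lb s q) * z s p q \<and>
           2 * d s \<ge> l s p - L s * (1 - z s p q - z s q p) + lb s q * (z s p q + z s q p)"
  proof
    assume "p = i \<and> q = j" then show ?thesis using A1 by simp
  next
    assume "p = j \<and> q = i" then show ?thesis using A2 by (simp add: algebra_simps)
  qed
qed

end
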